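(* Let $d\ge1$, $\alpha\in(0,2)$ and $\gamma\in[0,\alpha\wedge d)$. Suppose $F$ is a measurable function with $|F|(z,w)\le A(|z-w|^\beta\wedge1)$ for some $A>0$ and $\beta>\alpha$. Then there exists $C_8=C_8(\beta,d,\alpha,\gamma)>0$ such that for every Borel subset $D$ of $\mathbb{R}^d$ (with $F$ restricted to $D\times D$), $N^{\alpha,\gamma}_F(t)\le C_8\,A\,t$ for all $t>0$. In particular $F\in\mathbf{J}_{\alpha,\gamma}$.
   Context: $\delta_D(x)$ is the Euclidean distance from $x$ to $D^c$; $q(t,x,y):=t^{-d/\alpha}\wedge\frac{t}{|x-y|^{d+\alpha}}$. For a measurable $F$ on $D\times D$ vanishing on the diagonal, $N^{\alpha,\gamma}_F(t):=\sup_{y\in D}\int_0^t\int_{D\times D}\big(1\wedge\frac{\delta_D(z)}{s^{1/\alpha}}\big)^\gamma q(s,y,z)\big(1+\frac{|z-w|\wedge t^{1/\alpha}}{|y-z|}\big)^\gamma\frac{|F|(z,w)+|F|(w,z)}{|z-w|^{d+\alpha}}\,dw\,dz\,ds$, and $F\in\mathbf{J}_{\alpha,\gamma}$ iff $F$ is bounded and $\lim_{t\downarrow0}N^{\alpha,\gamma}_F(t)=0$. *)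

theory Defs
  imports "HOL-Analysis.Analysis"
begin

(* x ^ g for x >= 0, with the mathematical convention x^0 = 1 (Isabelle has 0 powr 0 = 0) *)
definition rpow :: "real \<Rightarrow> real \<Rightarrow> real" where
  "rpow x g = (if g = 0 then 1 else x powr g)"

(* delta_D(z) = infdist z (-D); if D^c is empty, delta_D = +infinity and the factor is 1 *)
definition bdry_factor :: "'a::euclidean_space set \<Rightarrow> real \<Rightarrow> real \<Rightarrow> real \<Rightarrow> 'a \<Rightarrow> real" where
  "bdry_factor D \<alpha> \<gamma> s z =
     (if - D = {} then 1 else rpow (min 1 (infdist z (- D) / s powr (1 / \<alpha>))) \<gamma>)"

(* q(t,x,y) = t^{-d/alpha} \<and> t/|x-y|^{d+alpha}, d = DIM('a) (with t/0 = infinity) *)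
definition qker :: "real \<Rightarrow> real \<Rightarrow> 'a::euclidean_space \<Rightarrow> 'a \<Rightarrow> real" where
  "qker \<alpha> t x y =
     (if x = y then t powr (- real DIM('a) / \<alpha>)
      else min (t powr (- real DIM('a) / \<alpha>)) (t / norm (x - y) powr (real DIM('a) + \<alpha>)))"

definition NF :: "real \<Rightarrow> real \<Rightarrow> 'a::euclidean_space set \<Rightarrow> ('a \<Rightarrow> 'a \<Rightarrow> real) \<Rightarrow> real \<Rightarrow> ennreal" where
  "NF \<alpha> \<gamma> D F t =
     (SUP y\<in>D. \<integral>\<^sup>+ s. \<integral>\<^sup>+ z. \<integral>\<^sup>+ w.
        indicator {0<..<t} s * indicator D z * indicator D w *
        ennreal (bdry_factor D \<alpha> \<gamma> s z * qker \<alpha> s y z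
          * rpow (1 + (if y = z then 0 else min (norm (z - w)) (t powr (1 / \<alpha>)) / norm (y - z))) \<gamma>
          * (\<bar>F z w\<bar> + \<bar>F w z\<bar>) / norm (z - w) powr (real DIM('a) + \<alpha>))
        \<partial>lborel \<partial>lborel \<partial>lborel)"

definition J_class :: "real \<Rightarrow> real \<Rightarrow> 'a::euclidean_space set \<Rightarrow> ('a \<Rightarrow> 'a \<Rightarrow> real) \<Rightarrow> bool" where
  "J_class \<alpha> \<gamma> D F \<longleftrightarrow>
     (\<exists>M. \<forall>z\<in>D. \<forall>w\<in>D. \<bar>F z w\<bar> \<le> M) \<and> ((NF \<alpha> \<gamma> D F \<longlongrightarrow> 0) (at_right 0))"

end

theory Submission
  imports Defs "HOL-Analysis.Analysis"
begin

lemma ennreal_term_le_suminf: "(f::nat \<Rightarrow> ennreal) i \<le> (\<Sum>j. f j)"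
proof -
  have "f i = (\<Sum>j\<in>{i}. f j)" by simp
  also have "\<dots> \<le> (\<Sum>j. f j)" by (rule sum_le_suminf) (auto intro: summableI)
  finally show ?thesis .
qed

lemma shell_bound:
  fixes S :: "'a::euclidean_space set" and p :: real and a \<rho> :: "nat \<Rightarrow> real"
  assumes S: "S \<in> sets borel" and a: "\<And>k. a k \<ge> 0" and r: "\<And>k. \<rho> k \<ge> 0"
    and ex: "\<And>x. x \<in> S \<Longrightarrow> x \<noteq> 0 \<Longrightarrow> \<exists>k. norm x powr (-p) \<le> a k \<and> norm x \<le> \<rho> k"
    and sm: "(\<lambda>k. a k * \<rho> k ^ DIM('a)) sums L"
  shows "(\<integral>\<^sup>+x. indicator S x * ennreal (norm x powr (-p)) \<partial>lborel)
     \<le> ennreal (unit_ball_vol DIM('a) * L)"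
proof -
  have "(\<integral>\<^sup>+x. indicator S x * ennreal (norm x powr (-p)) \<partial>lborel)
     \<le> (\<integral>\<^sup>+(x::'a). (\<Sum>k. ennreal (a k) * indicator (cball 0 (\<rho> k)) x) \<partial>lborel)"
  proof (intro nn_integral_mono)
    fix x :: 'a assume "x \<in> space lborel"
    show "indicator S x * ennreal (norm x powr (-p)) \<le> (\<Sum>k. ennreal (a k) * indicator (cball 0 (\<rho> k)) x)"
    proof (cases "x \<in> S \<and> x \<noteq> 0")
      case True
      then obtain k where k: "norm x powr (-p) \<le> a k" "norm x \<le> \<rho> k" using ex by blast
      have "indicator S x * ennreal (norm x powr (-p)) \<le> ennreal (a k) * indicator (cball 0 (\<rho> k)) x"
        using True k by (auto simp: indicator_def intro: ennreal_leI)
      also have "\<dots> \<le> (\<Sum>k. ennreal (a k) * indicator (cball 0 (\<rho> k)) x)"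
        by (rule ennreal_term_le_suminf[where f="\<lambda>k. ennreal (a k) * indicator (cball 0 (\<rho> k)) x"])
      finally show ?thesis .
    next
      case False
      then show ?thesis by (auto simp: indicator_def)
    qed
  qed
  also have "\<dots> = (\<Sum>k. \<integral>\<^sup>+(x::'a). ennreal (a k) * indicator (cball 0 (\<rho> k)) x \<partial>lborel)"
    proof (rule nn_integral_suminf)
    fix k
    have "cball (0::'a) (\<rho> k) \<in> sets lborel" by simp
    then show "(\<lambda>x. ennreal (a k) * indicator (cball (0::'a) (\<rho> k)) x) \<in> borel_measurable lborel"
      by (intro borel_measurable_times_ennreal borel_measurable_const borel_measurable_indicator)
  qed
  also have "\<dots> = (\<Sum>k. ennreal (unit_ball_vol DIM('a) * (a k * \<rho> k ^ DIM('a))))"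
    by (subst nn_integral_cmult_indicator) (auto simp: emeasure_cball a r ennreal_mult[symmetric] mult_ac)
  also have "\<dots> = ennreal (unit_ball_vol DIM('a) * L)"
    by (rule suminf_ennreal_eq) (auto intro!: sums_mult sm mult_nonneg_nonneg a r zero_le_power)
  finally show ?thesis .
qed

lemma near_bound:
  fixes p r :: real
  assumes p: "0 \<le> p" "p < real DIM('a::euclidean_space)" and r: "r > 0"
  shows "(\<integral>\<^sup>+(x::'a). indicator (cball 0 r) x * ennreal (norm x powr (-p)) \<partial>lborel)
     \<le> ennreal (unit_ball_vol DIM('a) * ((2 powr p / (1 - 2 powr (p - DIM('a)))) * r powr (DIM('a) - p)))"
proof (rule shell_bound)
  define d where "d = real DIM('a)"
  show "(\<lambda>k. (r / 2^(k+1)) powr (-p) * (r / 2^k) ^ DIM('a)) sums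
     ((2 powr p / (1 - 2 powr (p - DIM('a)))) * r powr (DIM('a) - p))"
  proof -
    have "2 powr (p - d) < 2 powr 0" by (rule powr_less_mono) (use p in \<open>auto simp: d_def\<close>)
    then have c: "\<bar>2 powr (p - d)\<bar> < 1" by simp
    have eq: "(r / 2^(k+1)) powr (-p) * (r / 2^k) ^ DIM('a) = (2 powr p * r powr (d - p)) * (2 powr (p - d)) ^ k" for k :: nat
    proof -
      have "(r / 2^k) ^ DIM('a) = (r / 2^k) powr d" using r by (simp add: d_def powr_realpow)
      also have "\<dots> = r powr d / 2 powr (k * d)"
        using r by (simp add: powr_divide powr_realpow[symmetric] powr_powr)
      finally have 1: "(r / 2^k) ^ DIM('a) = r powr d / 2 powr (k * d)" .
      have e: "(2::real)^(k+1) = 2 powr (real k + 1)" using powr_realpow[of 2 "k+1"] by (simp add: add.commute)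
      have 2: "(r / 2^(k+1)) powr (-p) = r powr (-p) * 2 powr ((k+1) * p)"
        unfolding e using r by (simp add: powr_divide powr_powr powr_minus divide_simps add.commute)
      have 3: "(2 powr (p - d)) ^ k = 2 powr (k * (p - d))"
        by (simp add: powr_realpow[symmetric] powr_powr mult.commute)
      show ?thesis unfolding 1 2 3
        by (simp add: powr_diff powr_add powr_minus field_simps right_diff_distrib distrib_right)
    qed
    have "(\<lambda>k. (2 powr p * r powr (d - p)) * (2 powr (p - d)) ^ k) sums
       ((2 powr p * r powr (d - p)) * (1 / (1 - 2 powr (p - d))))"
      by (intro sums_mult geometric_sums) (use c in simp)
    then show ?thesis unfolding eq d_def by simp
  qed
next
  fix x :: 'a assume x: "x \<in> cball 0 r" "x \<noteq> 0"
  define n where "n = norm x"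
  have n: "0 < n" "n \<le> r" using x by (auto simp: n_def)
  define L where "L = log 2 (r / n)"
  have L0: "0 \<le> L" using n by (simp add: L_def)
  define k where "k = nat \<lfloor>L\<rfloor>"
  have k1: "real k \<le> L" and k2: "L < real k + 1" using L0 by (auto simp: k_def)
  have "2 powr real k \<le> r / n" using k1 n by (simp add: L_def le_log_iff)
  then have a1: "n \<le> r / 2^k" using n by (simp add: powr_realpow field_simps)
  have "r / n < 2 powr (real k + 1)" using k2 n by (simp add: L_def log_less_iff)
  then have "r / n < 2 ^ (k+1)" using powr_realpow[of 2 "k+1"] by (simp add: add.commute)
  then have a2: "r / 2^(k+1) \<le> n" using n by (simp add: field_simps)
  have "n powr (-p) \<le> (r / 2^(k+1)) powr (-p)"
    by (rule powr_mono2') (use p r a2 in auto)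
  then show "\<exists>k. norm x powr (-p) \<le> (r / 2^(k+1)) powr (-p) \<and> norm x \<le> r / 2^k"
    using a1 unfolding n_def by blast
qed (use r in auto)

lemma far_bound:
  fixes p r :: real
  assumes p: "real DIM('a::euclidean_space) < p" and r: "r > 0"
  shows "(\<integral>\<^sup>+(x::'a). indicator {x. r \<le> norm x} x * ennreal (norm x powr (-p)) \<partial>lborel)
     \<le> ennreal (unit_ball_vol DIM('a) * ((2 ^ DIM('a) / (1 - 2 powr (DIM('a) - p))) * r powr (DIM('a) - p)))"
proof (rule shell_bound)
  define d where "d = real DIM('a)"
  show "(\<lambda>k. (r * 2^k) powr (-p) * (r * 2^(k+1)) ^ DIM('a)) sums
     ((2 ^ DIM('a) / (1 - 2 powr (DIM('a) - p))) * r powr (DIM('a) - p))"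
  proof -
    have "2 powr (d - p) < 2 powr 0" by (rule powr_less_mono) (use p in \<open>auto simp: d_def\<close>)
    then have c: "\<bar>2 powr (d - p)\<bar> < 1" by simp
    have eq: "(r * 2^k) powr (-p) * (r * 2^(k+1)) ^ DIM('a) = (2 ^ DIM('a) * r powr (d - p)) * (2 powr (d - p)) ^ k" for k :: nat
    proof -
      have e: "(2::real)^(k+1) = 2 powr (real k + 1)" using powr_realpow[of 2 "k+1"] by (simp add: add.commute)
      have e2: "(2::real)^k = 2 powr (real k)" using powr_realpow[of 2 "k"] by simp
      have "(r * 2^(k+1)) ^ DIM('a) = (r * 2^(k+1)) powr d" using r by (simp add: d_def powr_realpow)
      also have "\<dots> = r powr d * 2 powr ((k+1) * d)"
        unfolding e using r by (simp add: powr_mult powr_powr add.commute)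
      finally have 1: "(r * 2^(k+1)) ^ DIM('a) = r powr d * 2 powr ((k+1) * d)" .
      have 2: "(r * 2^k) powr (-p) = r powr (-p) * 2 powr (k * (-p))"
        unfolding e2 using r by (simp add: powr_mult powr_powr)
      have 3: "(2 powr (d - p)) ^ k = 2 powr (k * (d - p))"
        by (simp add: powr_realpow[symmetric] powr_powr mult.commute)
      have 4: "(2::real) ^ DIM('a) = 2 powr d" by (simp add: d_def powr_realpow)
      show ?thesis unfolding 1 2 3 4
        by (simp add: powr_diff powr_add powr_minus field_simps right_diff_distrib distrib_right)
    qed
    have "(\<lambda>k. (2 ^ DIM('a) * r powr (d - p)) * (2 powr (d - p)) ^ k) sums
       ((2 ^ DIM('a) * r powr (d - p)) * (1 / (1 - 2 powr (d - p))))"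
      by (intro sums_mult geometric_sums) (use c in simp)
    then show ?thesis unfolding eq d_def by simp
  qed
next
  fix x :: 'a assume x: "x \<in> {x. r \<le> norm x}" "x \<noteq> 0"
  define n where "n = norm x"
  have n: "0 < n" "r \<le> n" using x r by (auto simp: n_def)
  define L where "L = log 2 (n / r)"
  have L0: "0 \<le> L" using n r by (simp add: L_def)
  define k where "k = nat \<lfloor>L\<rfloor>"
  have k1: "real k \<le> L" and k2: "L < real k + 1" using L0 by (auto simp: k_def)
  have "2 powr real k \<le> n / r" using k1 n r by (simp add: L_def le_log_iff)
  then have a1: "r * 2^k \<le> n" using r by (simp add: powr_realpow field_simps)
  have "n / r < 2 powr (real k + 1)" using k2 n r by (simp add: L_def log_less_iff)
  then have "n / r < 2 ^ (k+1)" using powr_realpow[of 2 "k+1"] by (simp add: add.commute)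
  then have a2: "n \<le> r * 2^(k+1)" using r by (simp add: field_simps)
  have "n powr (-p) \<le> (r * 2^k) powr (-p)"
    by (rule powr_mono2') (use p r a1 in auto)
  then show "\<exists>k. norm x powr (-p) \<le> (r * 2^k) powr (-p) \<and> norm x \<le> r * 2^(k+1)"
    using a2 unfolding n_def by blast
qed (use r in auto)

lemma nn_integral_translate:
  fixes f :: "'a::euclidean_space \<Rightarrow> ennreal" and z :: 'a
  assumes f: "f \<in> borel_measurable borel"
  shows "(\<integral>\<^sup>+w. f (w - z) \<partial>lborel) = (\<integral>\<^sup>+x. f x \<partial>lborel)"
proof -
  have "(\<integral>\<^sup>+x. f x \<partial>lborel) = (\<integral>\<^sup>+x. f x \<partial>(distr lborel borel ((+) (-z))))"
    by (simp add: lborel_distr_plus)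
  also have "\<dots> = (\<integral>\<^sup>+w. f (-z + w) \<partial>lborel)"
    by (rule nn_integral_distr) (use f in auto)
  finally show ?thesis by simp
qed

lemma time_integral:
  fixes q t :: real
  assumes q: "0 \<le> q" "q < 1" and t: "t > 0"
  shows "(\<integral>\<^sup>+s. indicator {0..t} s * ennreal (s powr (-q)) \<partial>lborel) = ennreal (t powr (1 - q) / (1 - q))"
proof -
  have h: "((\<lambda>x. x powr (-q)) has_integral (t powr (-q+1) / (-q+1))) {0..t}"
    by (rule has_integral_powr_from_0) (use q t in auto)
  have h2: "((\<lambda>s. if s \<in> {0..t} then s powr (-q) else 0) has_integral (t powr (1 - q) / (1 - q))) UNIV"
    using h by (subst has_integral_restrict_UNIV) (simp add: add.commute)
  have "(\<integral>\<^sup>+s. indicator {0..t} s * ennreal (s powr (-q)) \<partial>lborel)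
      = (\<integral>\<^sup>+s. ennreal (if s \<in> {0..t} then s powr (-q) else 0) \<partial>lborel)"
    by (intro nn_integral_cong) (auto simp: indicator_def)
  also have "\<dots> = ennreal (t powr (1 - q) / (1 - q))"
    by (rule nn_integral_has_integral_lborel[OF _ _ h2]) auto
  finally show ?thesis .
qed

definition cN :: "nat \<Rightarrow> real \<Rightarrow> real" where
  "cN n p = unit_ball_vol n * (2 powr p / (1 - 2 powr (p - n)))"
definition cF :: "nat \<Rightarrow> real \<Rightarrow> real" where
  "cF n p = unit_ball_vol n * (2 ^ n / (1 - 2 powr (n - p)))"

lemma cN_nonneg: assumes "p < real n" shows "cN n p \<ge> 0"
proof -
  have "2 powr (p - n) < 2 powr 0" by (rule powr_less_mono) (use assms in auto)
  then show ?thesis unfolding cN_def by (intro mult_nonneg_nonneg divide_nonneg_pos) auto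
qed

lemma cF_nonneg: assumes "real n < p" shows "cF n p \<ge> 0"
proof -
  have "2 powr (n - p) < 2 powr 0" by (rule powr_less_mono) (use assms in auto)
  then show ?thesis unfolding cF_def by (intro mult_nonneg_nonneg divide_nonneg_pos) auto
qed

lemma near_bound':
  fixes p r :: real
  assumes "0 \<le> p" "p < real DIM('a::euclidean_space)" "r > 0"
  shows "(\<integral>\<^sup>+(x::'a). indicator (cball 0 r) x * ennreal (norm x powr (-p)) \<partial>lborel)
     \<le> ennreal (cN DIM('a) p * r powr (DIM('a) - p))"
  using near_bound[OF assms] unfolding cN_def by (simp add: mult.assoc)

lemma far_bound':
  fixes p r :: real
  assumes "real DIM('a::euclidean_space) < p" "r > 0"
  shows "(\<integral>\<^sup>+(x::'a). indicator {x. r \<le> norm x} x * ennreal (norm x powr (-p)) \<partial>lborel)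
     \<le> ennreal (cF DIM('a) p * r powr (DIM('a) - p))"
  using far_bound[OF assms] unfolding cF_def by (simp add: mult.assoc)

lemma nn_integral_add4:
  assumes "f1 \<in> borel_measurable M" "f2 \<in> borel_measurable M" "f3 \<in> borel_measurable M" "f4 \<in> borel_measurable M"
  shows "(\<integral>\<^sup>+x. (f1 x + f2 x) + (f3 x + f4 x) \<partial>M) =
    ((\<integral>\<^sup>+x. f1 x \<partial>M) + (\<integral>\<^sup>+x. f2 x \<partial>M)) + ((\<integral>\<^sup>+x. f3 x \<partial>M) + (\<integral>\<^sup>+x. f4 x \<partial>M))"
proof -
  have "(\<integral>\<^sup>+x. (f1 x + f2 x) + (f3 x + f4 x) \<partial>M) = (\<integral>\<^sup>+x. (f1 x + f2 x) \<partial>M) + (\<integral>\<^sup>+x. (f3 x + f4 x) \<partial>M)"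
    by (rule nn_integral_add) (use assms in auto)
  also have "(\<integral>\<^sup>+x. (f1 x + f2 x) \<partial>M) = (\<integral>\<^sup>+x. f1 x \<partial>M) + (\<integral>\<^sup>+x. f2 x \<partial>M)"
    by (rule nn_integral_add) (use assms in auto)
  also have "(\<integral>\<^sup>+x. (f3 x + f4 x) \<partial>M) = (\<integral>\<^sup>+x. f3 x \<partial>M) + (\<integral>\<^sup>+x. f4 x \<partial>M)"
    by (rule nn_integral_add) (use assms in auto)
  finally show ?thesis .
qed

definition Qb :: "real \<Rightarrow> real \<Rightarrow> real \<Rightarrow> real \<Rightarrow> 'a::euclidean_space \<Rightarrow> real" where
  "Qb \<alpha> \<gamma> T s x =
     s powr (- real DIM('a) / \<alpha>) * indicator (cball 0 (s powr (1/\<alpha>))) x * (1 + T * norm x powr (-\<gamma>))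
     + s * indicator {x. s powr (1/\<alpha>) \<le> norm x} x
        * (norm x powr (-(real DIM('a) + \<alpha>)) + T * norm x powr (-(real DIM('a) + \<alpha> + \<gamma>)))"

lemma Qb_nonneg: "s > 0 \<Longrightarrow> T \<ge> 0 \<Longrightarrow> Qb \<alpha> \<gamma> T s x \<ge> 0"
  unfolding Qb_def by (intro add_nonneg_nonneg mult_nonneg_nonneg) (auto simp: indicator_def)

lemma Qb_meas[measurable]: "Qb \<alpha> \<gamma> T s \<in> borel_measurable (borel :: 'a::euclidean_space measure)"
proof -
  have mB: "cball (0::'a) (s powr (1/\<alpha>)) \<in> sets borel" by simp
  have mO: "{x::'a. s powr (1/\<alpha>) \<le> norm x} \<in> sets borel" by simp
  show ?thesis unfolding Qb_def[abs_def] using mB mO by measurable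
qed

lemma Qb_int:
  fixes \<alpha> \<gamma> T s :: real
  assumes a: "0 < \<alpha>" and g: "0 \<le> \<gamma>" "\<gamma> < real DIM('a::euclidean_space)" and T: "T \<ge> 0" and s: "s > 0"
  shows "(\<integral>\<^sup>+(x::'a). ennreal (Qb \<alpha> \<gamma> T s x) \<partial>lborel)
    \<le> ennreal ((unit_ball_vol DIM('a) + cF DIM('a) (DIM('a) + \<alpha>))
        + T * (cN DIM('a) \<gamma> + cF DIM('a) (DIM('a) + \<alpha> + \<gamma>)) * s powr (-\<gamma>/\<alpha>))"
proof -
  define d where "d = real DIM('a)"
  define \<rho> where "\<rho> = s powr (1/\<alpha>)"
  have \<rho>: "\<rho> > 0" using s by (simp add: \<rho>_def)
  have d0: "d > 0" by (simp add: d_def)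
  have dd: "real DIM('a) = d" by (simp add: d_def)
  let ?B = "cball (0::'a) \<rho>" and ?O = "{x::'a. \<rho> \<le> norm x}"
  have mB: "?B \<in> sets lborel" by simp
  have mO: "?O \<in> sets lborel" by simp
  have eq: "ennreal (Qb \<alpha> \<gamma> T s x) =
      (ennreal (s powr (-d/\<alpha>)) * indicator ?B x
     + ennreal (s powr (-d/\<alpha>) * T) * (indicator ?B x * ennreal (norm x powr (-\<gamma>))))
     + (ennreal s * (indicator ?O x * ennreal (norm x powr (-(d+\<alpha>))))
     + ennreal (s * T) * (indicator ?O x * ennreal (norm x powr (-(d+\<alpha>+\<gamma>)))))" for x :: 'a
    unfolding Qb_def d_def \<rho>_def using s T
    by (auto simp: indicator_def ennreal_plus[symmetric] ennreal_mult[symmetric] algebra_simps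
        simp del: ennreal_plus)
  have "(\<integral>\<^sup>+(x::'a). ennreal (Qb \<alpha> \<gamma> T s x) \<partial>lborel) =
      (\<integral>\<^sup>+(x::'a). (ennreal (s powr (-d/\<alpha>)) * indicator ?B x
     + ennreal (s powr (-d/\<alpha>) * T) * (indicator ?B x * ennreal (norm x powr (-\<gamma>))))
     + (ennreal s * (indicator ?O x * ennreal (norm x powr (-(d+\<alpha>))))
     + ennreal (s * T) * (indicator ?O x * ennreal (norm x powr (-(d+\<alpha>+\<gamma>))))) \<partial>lborel)"
    by (rule nn_integral_cong) (rule eq)
  also have "\<dots> = ((\<integral>\<^sup>+(x::'a). ennreal (s powr (-d/\<alpha>)) * indicator ?B x \<partial>lborel)
     + (\<integral>\<^sup>+(x::'a). ennreal (s powr (-d/\<alpha>) * T) * (indicator ?B x * ennreal (norm x powr (-\<gamma>))) \<partial>lborel))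
     + ((\<integral>\<^sup>+(x::'a). ennreal s * (indicator ?O x * ennreal (norm x powr (-(d+\<alpha>)))) \<partial>lborel)
     + (\<integral>\<^sup>+(x::'a). ennreal (s * T) * (indicator ?O x * ennreal (norm x powr (-(d+\<alpha>+\<gamma>)))) \<partial>lborel))"
    by (rule nn_integral_add4) (use mB mO in measurable)
  also have "\<dots> \<le> (ennreal (unit_ball_vol DIM('a)) + ennreal (T * cN DIM('a) \<gamma> * s powr (-\<gamma>/\<alpha>)))
      + (ennreal (cF DIM('a) (DIM('a) + \<alpha>)) + ennreal (T * cF DIM('a) (DIM('a) + \<alpha> + \<gamma>) * s powr (-\<gamma>/\<alpha>)))"
  proof (intro add_mono)
    have r1: "\<rho> ^ DIM('a) = s powr (d/\<alpha>)"
      using s \<rho> by (simp add: \<rho>_def d_def powr_realpow[symmetric] powr_powr)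
    have "s powr (-d/\<alpha>) * \<rho> ^ DIM('a) = s powr (-d/\<alpha> + d/\<alpha>)" unfolding r1 by (rule powr_add[symmetric])
    then have r1': "s powr (-d/\<alpha>) * \<rho> ^ DIM('a) = 1" using s by simp
    show "(\<integral>\<^sup>+(x::'a). ennreal (s powr (-d/\<alpha>)) * indicator ?B x \<partial>lborel) \<le> ennreal (unit_ball_vol DIM('a))"
      using mB r1' emeasure_cball[of \<rho> "0::'a"] \<rho> by (simp add: nn_integral_cmult_indicator ennreal_mult[symmetric] mult.assoc mult.left_commute)
    have r2: "s powr (-d/\<alpha>) * \<rho> powr (d - \<gamma>) = s powr (-\<gamma>/\<alpha>)"
      using s by (simp add: \<rho>_def powr_powr powr_add[symmetric] diff_divide_distrib)
    have "(\<integral>\<^sup>+(x::'a). ennreal (s powr (-d/\<alpha>) * T) * (indicator ?B x * ennreal (norm x powr (-\<gamma>))) \<partial>lborel)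
       = ennreal (s powr (-d/\<alpha>) * T) * (\<integral>\<^sup>+(x::'a). indicator ?B x * ennreal (norm x powr (-\<gamma>)) \<partial>lborel)"
      by (rule nn_integral_cmult) (use mB in measurable)
    also have "\<dots> \<le> ennreal (s powr (-d/\<alpha>) * T) * ennreal (cN DIM('a) \<gamma> * \<rho> powr (DIM('a) - \<gamma>))"
      by (intro mult_left_mono near_bound' g \<rho>) simp
    also have "\<dots> = ennreal (T * cN DIM('a) \<gamma> * s powr (-\<gamma>/\<alpha>))"
    proof -
      have e: "s powr (-d/\<alpha>) * T * (cN DIM('a) \<gamma> * \<rho> powr (DIM('a) - \<gamma>)) = T * cN DIM('a) \<gamma> * s powr (-\<gamma>/\<alpha>)"
        unfolding r2[symmetric] by (simp add: dd mult_ac)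
      show ?thesis using T s by (subst ennreal_mult'[symmetric]) (simp_all only: e, simp)
    qed
    finally show "(\<integral>\<^sup>+(x::'a). ennreal (s powr (-d/\<alpha>) * T) * (indicator ?B x * ennreal (norm x powr (-\<gamma>))) \<partial>lborel)
       \<le> ennreal (T * cN DIM('a) \<gamma> * s powr (-\<gamma>/\<alpha>))" .
    have r3: "s * \<rho> powr (d - (d + \<alpha>)) = 1"
      using s a by (simp add: \<rho>_def powr_powr powr_minus)
    have "(\<integral>\<^sup>+(x::'a). ennreal s * (indicator ?O x * ennreal (norm x powr (-(d+\<alpha>)))) \<partial>lborel)
       = ennreal s * (\<integral>\<^sup>+(x::'a). indicator ?O x * ennreal (norm x powr (-(d+\<alpha>))) \<partial>lborel)"
      by (rule nn_integral_cmult) (use mO in measurable)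
    also have "\<dots> \<le> ennreal s * ennreal (cF DIM('a) (d+\<alpha>) * \<rho> powr (DIM('a) - (d+\<alpha>)))"
      by (intro mult_left_mono far_bound' \<rho>) (use a in \<open>simp_all add: d_def\<close>)
    also have "\<dots> = ennreal (cF DIM('a) (DIM('a) + \<alpha>))"
    proof -
      have e: "s * (cF DIM('a) (d+\<alpha>) * \<rho> powr (DIM('a) - (d+\<alpha>))) = cF DIM('a) (DIM('a) + \<alpha>)"
        using r3 by (simp add: dd mult_ac)
      show ?thesis by (subst ennreal_mult'[symmetric]) (use s in simp, simp only: e)
    qed
    finally show "(\<integral>\<^sup>+(x::'a). ennreal s * (indicator ?O x * ennreal (norm x powr (-(d+\<alpha>)))) \<partial>lborel)
       \<le> ennreal (cF DIM('a) (DIM('a) + \<alpha>))" .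
    have r4: "s * \<rho> powr (d - (d + \<alpha> + \<gamma>)) = s powr (-\<gamma>/\<alpha>)"
    proof -
      have "s * \<rho> powr (d - (d + \<alpha> + \<gamma>)) = s powr 1 * s powr ((- \<alpha> - \<gamma>) / \<alpha>)"
        using s by (simp add: \<rho>_def powr_powr)
      also have "\<dots> = s powr (1 + (- \<alpha> - \<gamma>) / \<alpha>)" by (simp add: powr_add)
      also have "1 + (- \<alpha> - \<gamma>) / \<alpha> = -\<gamma>/\<alpha>" using a by (simp add: field_simps)
      finally show ?thesis .
    qed
    have "(\<integral>\<^sup>+(x::'a). ennreal (s * T) * (indicator ?O x * ennreal (norm x powr (-(d+\<alpha>+\<gamma>)))) \<partial>lborel)
       = ennreal (s * T) * (\<integral>\<^sup>+(x::'a). indicator ?O x * ennreal (norm x powr (-(d+\<alpha>+\<gamma>))) \<partial>lborel)"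
      by (rule nn_integral_cmult) (use mO in measurable)
    also have "\<dots> \<le> ennreal (s * T) * ennreal (cF DIM('a) (d+\<alpha>+\<gamma>) * \<rho> powr (DIM('a) - (d+\<alpha>+\<gamma>)))"
      by (intro mult_left_mono far_bound' \<rho>) (use a g in \<open>simp_all add: d_def\<close>)
    also have "\<dots> = ennreal (T * cF DIM('a) (DIM('a) + \<alpha> + \<gamma>) * s powr (-\<gamma>/\<alpha>))"
    proof -
      have e: "s * T * (cF DIM('a) (d+\<alpha>+\<gamma>) * \<rho> powr (DIM('a) - (d+\<alpha>+\<gamma>))) = T * cF DIM('a) (DIM('a) + \<alpha> + \<gamma>) * s powr (-\<gamma>/\<alpha>)"
        unfolding r4[symmetric] by (simp add: dd mult_ac)
      show ?thesis by (subst ennreal_mult'[symmetric]) (use s T in simp, simp only: e)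
    qed
    finally show "(\<integral>\<^sup>+(x::'a). ennreal (s * T) * (indicator ?O x * ennreal (norm x powr (-(d+\<alpha>+\<gamma>)))) \<partial>lborel)
       \<le> ennreal (T * cF DIM('a) (DIM('a) + \<alpha> + \<gamma>) * s powr (-\<gamma>/\<alpha>))" .
  qed
  also have "\<dots> = ennreal ((unit_ball_vol DIM('a) + cF DIM('a) (DIM('a) + \<alpha>))
        + T * (cN DIM('a) \<gamma> + cF DIM('a) (DIM('a) + \<alpha> + \<gamma>)) * s powr (-\<gamma>/\<alpha>))"
  proof -
    have n1: "cN DIM('a) \<gamma> \<ge> 0" by (rule cN_nonneg) (use g in auto)
    have n2: "cF DIM('a) (DIM('a) + \<alpha>) \<ge> 0" by (rule cF_nonneg) (use a in auto)
    have n3: "cF DIM('a) (DIM('a) + \<alpha> + \<gamma>) \<ge> 0" by (rule cF_nonneg) (use a g in auto)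
    show ?thesis using n1 n2 n3 T s
      by (simp add: ennreal_plus[symmetric] algebra_simps del: ennreal_plus)
  qed
  finally show ?thesis .
qed
lemma bdry_le1: "s > 0 \<Longrightarrow> 0 \<le> bdry_factor D \<alpha> \<gamma> s z \<and> bdry_factor D \<alpha> \<gamma> s z \<le> 1" if "0 \<le> \<gamma>"
proof -
  assume s: "s > 0"
  have x: "0 \<le> min 1 (infdist z (- D) / s powr (1 / \<alpha>))" "min 1 (infdist z (- D) / s powr (1 / \<alpha>)) \<le> 1"
    using s by (auto simp: infdist_nonneg)
  show ?thesis unfolding bdry_factor_def rpow_def using x that by (auto intro: powr_le1)
qed

lemma R_bound:
  fixes u v T m \<gamma> :: real
  assumes g: "0 \<le> \<gamma>" and u: "0 \<le> u" "u \<le> v" and v: "v powr \<gamma> = T * m powr (-\<gamma>)" "v > 0" and T: "T \<ge> 0" and m: "m > 0"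
  shows "rpow (1 + u) \<gamma> \<le> 2 powr \<gamma> * (1 + T * m powr (-\<gamma>))"
proof (cases "\<gamma> = 0")
  case True then show ?thesis using T m by (simp add: rpow_def)
next
  case False
  have tm: "0 \<le> T * m powr (-\<gamma>)" using T by simp
  have "rpow (1 + u) \<gamma> = (1 + u) powr \<gamma>" using False by (simp add: rpow_def)
  also have "\<dots> \<le> (1 + v) powr \<gamma>" by (rule powr_mono2) (use g u in auto)
  also have "\<dots> \<le> 2 powr \<gamma> * (1 + T * m powr (-\<gamma>))"
  proof (cases "v \<le> 1")
    case True
    have "(1 + v) powr \<gamma> \<le> 2 powr \<gamma>" by (rule powr_mono2) (use g True v in auto)
    also have "\<dots> \<le> 2 powr \<gamma> * (1 + T * m powr (-\<gamma>))" using tm by simp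
    finally show ?thesis .
  next
    case False
    have "(1 + v) powr \<gamma> \<le> (2 * v) powr \<gamma>" by (rule powr_mono2) (use g False in auto)
    also have "\<dots> = 2 powr \<gamma> * (T * m powr (-\<gamma>))" using v by (simp add: powr_mult)
    also have "\<dots> \<le> 2 powr \<gamma> * (1 + T * m powr (-\<gamma>))" by simp
    finally show ?thesis .
  qed
  finally show ?thesis .
qed

lemma qR_bound:
  fixes y z w :: "'a::euclidean_space"
  assumes a: "0 < \<alpha>" and g: "0 \<le> \<gamma>" and t: "t > 0" and s: "s > 0"
  shows "qker \<alpha> s y z * rpow (1 + (if y = z then 0 else min (norm (z - w)) (t powr (1 / \<alpha>)) / norm (y - z))) \<gamma>
     \<le> 2 powr \<gamma> * Qb \<alpha> \<gamma> (t powr (\<gamma>/\<alpha>)) s (z - y)"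
proof (cases "y = z")
  case True
  have "qker \<alpha> s y z = s powr (- real DIM('a) / \<alpha>)" using True by (simp add: qker_def)
  moreover have "Qb \<alpha> \<gamma> (t powr (\<gamma>/\<alpha>)) s (z - y) = s powr (- real DIM('a) / \<alpha>)"
    using True s by (simp add: Qb_def indicator_def)
  moreover have "rpow 1 \<gamma> = 1" by (simp add: rpow_def)
  moreover have "1 \<le> 2 powr \<gamma>" using g by (intro ge_one_powr_ge_zero) auto
  moreover have "1 * s powr (- real DIM('a) / \<alpha>) \<le> 2 powr \<gamma> * s powr (- real DIM('a) / \<alpha>)"
    by (rule mult_right_mono) (use g in \<open>auto intro: ge_one_powr_ge_zero\<close>)
  ultimately show ?thesis using True by simp
next
  case False
  define m where "m = norm (z - y)"
  define T where "T = t powr (\<gamma>/\<alpha>)"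
  define \<rho> where "\<rho> = s powr (1/\<alpha>)"
  have m: "m > 0" using False by (simp add: m_def)
  have myz: "norm (y - z) = m" by (simp add: m_def norm_minus_commute)
  have T: "T \<ge> 0" by (simp add: T_def)
  define u where "u = min (norm (z - w)) (t powr (1 / \<alpha>)) / m"
  define v where "v = t powr (1 / \<alpha>) / m"
  have uv: "0 \<le> u" "u \<le> v" using m by (auto simp: u_def v_def divide_right_mono)
  have v: "v > 0" using m t by (simp add: v_def)
  have vp: "v powr \<gamma> = T * m powr (-\<gamma>)"
    using m t by (simp add: v_def T_def powr_divide powr_powr powr_minus divide_simps)
  have R: "rpow (1 + u) \<gamma> \<le> 2 powr \<gamma> * (1 + T * m powr (-\<gamma>))"
    by (rule R_bound[OF g uv vp v T m])
  have R0: "rpow (1 + u) \<gamma> \<ge> 0" using uv by (simp add: rpow_def)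
  have qk: "qker \<alpha> s y z = min (s powr (- real DIM('a) / \<alpha>)) (s / m powr (real DIM('a) + \<alpha>))"
    using False myz by (simp add: qker_def)
  have pos: "0 \<le> 1 + T * m powr (-\<gamma>)" using T by simp
  have "qker \<alpha> s y z * rpow (1 + u) \<gamma> \<le> qker \<alpha> s y z * (2 powr \<gamma> * (1 + T * m powr (-\<gamma>)))"
    by (rule mult_left_mono[OF R]) (use s in \<open>simp add: qk\<close>)
  also have "\<dots> \<le> 2 powr \<gamma> * Qb \<alpha> \<gamma> T s (z - y)"
  proof (cases "m \<le> \<rho>")
    case True
    have "qker \<alpha> s y z * (2 powr \<gamma> * (1 + T * m powr (-\<gamma>)))
        \<le> s powr (- real DIM('a) / \<alpha>) * (2 powr \<gamma> * (1 + T * m powr (-\<gamma>)))"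
      by (rule mult_right_mono) (use pos in \<open>simp_all add: qk\<close>)
    also have "\<dots> \<le> 2 powr \<gamma> * Qb \<alpha> \<gamma> T s (z - y)"
      using True T s pos unfolding Qb_def m_def[symmetric] \<rho>_def[symmetric]
      by (simp add: indicator_def m_def[symmetric] algebra_simps)
    finally show ?thesis .
  next
    case False
    have "qker \<alpha> s y z * (2 powr \<gamma> * (1 + T * m powr (-\<gamma>)))
        \<le> (s * m powr (-(real DIM('a) + \<alpha>))) * (2 powr \<gamma> * (1 + T * m powr (-\<gamma>)))"
    proof (rule mult_right_mono)
      have "s / m powr (real DIM('a) + \<alpha>) = s * m powr (-(real DIM('a) + \<alpha>))"
        by (subst powr_minus) (simp add: divide_inverse)
      then show "qker \<alpha> s y z \<le> s * m powr (-(real DIM('a) + \<alpha>))" unfolding qk by linarith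
    qed (use pos in simp)
    also have "\<dots> = 2 powr \<gamma> * (s * (m powr (-(real DIM('a) + \<alpha>)) + T * m powr (-(real DIM('a) + \<alpha> + \<gamma>))))"
      using m by (simp add: algebra_simps powr_add[symmetric])
    also have "\<dots> \<le> 2 powr \<gamma> * Qb \<alpha> \<gamma> T s (z - y)"
      using False T s m unfolding Qb_def m_def[symmetric] \<rho>_def[symmetric]
      by (simp add: indicator_def m_def[symmetric])
    finally show ?thesis .
  qed
  finally show ?thesis using False by (simp add: u_def myz T_def)
qed

definition h0 :: "real \<Rightarrow> real \<Rightarrow> 'a::euclidean_space \<Rightarrow> real" where
  "h0 p0 \<alpha> x = indicator (cball 0 1) x * norm x powr (-p0)
     + indicator {x. 1 \<le> norm x} x * norm x powr (-(real DIM('a) + \<alpha>))"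

lemma h0_nonneg: "h0 p0 \<alpha> x \<ge> 0"
  unfolding h0_def by (auto simp: indicator_def)

lemma F_bound:
  fixes F :: "'a::euclidean_space \<Rightarrow> 'a \<Rightarrow> real" and z w :: 'a
  assumes A: "A \<ge> 0" and b: "\<beta> \<ge> \<beta>'" and p0: "p0 = real DIM('a) + \<alpha> - \<beta>'"
    and FA: "\<forall>z w. \<bar>F z w\<bar> \<le> A * min (norm (z - w) powr \<beta>) 1"
  shows "(\<bar>F z w\<bar> + \<bar>F w z\<bar>) / norm (z - w) powr (real DIM('a) + \<alpha>) \<le> 2 * A * h0 p0 \<alpha> (w - z)"
proof -
  define n where "n = norm (w - z)"
  have nzw: "norm (z - w) = n" by (simp add: n_def norm_minus_commute)
  have S: "\<bar>F z w\<bar> + \<bar>F w z\<bar> \<le> 2 * A * min (n powr \<beta>) 1"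
    using FA[rule_format, of z w] FA[rule_format, of w z] by (simp add: nzw n_def)
  have H: "h0 p0 \<alpha> (w - z) = indicator (cball 0 1) (w - z) * n powr (-p0)
     + indicator {x. 1 \<le> norm x} (w - z) * n powr (-(real DIM('a) + \<alpha>))"
    by (simp add: h0_def n_def)
  show ?thesis
  proof (cases "n = 0")
    case True
    then show ?thesis using h0_nonneg[of p0 \<alpha> "w - z"] A by (simp add: nzw)
  next
    case False
    then have n: "n > 0" by (simp add: n_def)
    have "(\<bar>F z w\<bar> + \<bar>F w z\<bar>) / norm (z - w) powr (real DIM('a) + \<alpha>)
        \<le> 2 * A * min (n powr \<beta>) 1 / n powr (real DIM('a) + \<alpha>)"
      unfolding nzw by (rule divide_right_mono[OF S]) simp
    also have "\<dots> = 2 * A * (min (n powr \<beta>) 1 / n powr (real DIM('a) + \<alpha>))" by simp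
    also have "\<dots> \<le> 2 * A * h0 p0 \<alpha> (w - z)"
    proof (rule mult_left_mono[OF _ ]) 
      show "min (n powr \<beta>) 1 / n powr (real DIM('a) + \<alpha>) \<le> h0 p0 \<alpha> (w - z)"
      proof (cases "n \<le> 1")
        case True
        have "min (n powr \<beta>) 1 / n powr (real DIM('a) + \<alpha>) \<le> n powr \<beta>' / n powr (real DIM('a) + \<alpha>)"
        proof (rule divide_right_mono)
          have "n powr \<beta> \<le> n powr \<beta>'" by (rule powr_mono') (use n True b in auto)
          then show "min (n powr \<beta>) 1 \<le> n powr \<beta>'" by linarith
        qed simp
        also have "\<dots> = n powr (-p0)" using n by (simp add: p0 powr_diff[symmetric])
        also have "\<dots> \<le> h0 p0 \<alpha> (w - z)" unfolding H using True by (simp add: indicator_def n_def)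
        finally show ?thesis .
      next
        case False
        have "min (n powr \<beta>) 1 / n powr (real DIM('a) + \<alpha>) \<le> 1 / n powr (real DIM('a) + \<alpha>)"
          by (rule divide_right_mono) auto
        also have "\<dots> = n powr (-(real DIM('a) + \<alpha>))" by (subst powr_minus) (simp add: divide_inverse)
        also have "\<dots> \<le> h0 p0 \<alpha> (w - z)" unfolding H using False by (simp add: indicator_def n_def)
        finally show ?thesis .
      qed
    qed (use A in simp)
    finally show ?thesis .
  qed
qed

lemma h0_meas[measurable]: "h0 p0 \<alpha> \<in> borel_measurable (borel :: 'a::euclidean_space measure)"
proof -
  have mB: "cball (0::'a) 1 \<in> sets borel" by simp
  have mO: "{x::'a. 1 \<le> norm x} \<in> sets borel" by simp
  show ?thesis unfolding h0_def[abs_def] using mB mO by measurable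
qed

lemma W_int:
  fixes z :: "'a::euclidean_space" and p0 \<alpha> :: real
  assumes p0: "0 \<le> p0" "p0 < real DIM('a)" and a: "\<alpha> > 0"
  shows "(\<integral>\<^sup>+w. ennreal (h0 p0 \<alpha> (w - z)) \<partial>lborel) \<le> ennreal (cN DIM('a) p0 + cF DIM('a) (DIM('a) + \<alpha>))"
proof -
  let ?B = "cball (0::'a) 1" and ?O = "{x::'a. 1 \<le> norm x}"
  have mB: "?B \<in> sets borel" by simp
  have mO: "?O \<in> sets borel" by simp
  have m: "(\<lambda>x::'a. ennreal (h0 p0 \<alpha> x)) \<in> borel_measurable borel"
    unfolding h0_def using mB mO by measurable
  have "(\<integral>\<^sup>+w. ennreal (h0 p0 \<alpha> (w - z)) \<partial>lborel) = (\<integral>\<^sup>+(x::'a). ennreal (h0 p0 \<alpha> x) \<partial>lborel)"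
    by (rule nn_integral_translate[OF m])
  also have "\<dots> = (\<integral>\<^sup>+(x::'a). indicator ?B x * ennreal (norm x powr (-p0))
      + indicator ?O x * ennreal (norm x powr (-(real DIM('a) + \<alpha>))) \<partial>lborel)"
    by (intro nn_integral_cong) (auto simp: h0_def indicator_def ennreal_plus[symmetric] simp del: ennreal_plus)
  also have "\<dots> = (\<integral>\<^sup>+(x::'a). indicator ?B x * ennreal (norm x powr (-p0)) \<partial>lborel)
      + (\<integral>\<^sup>+(x::'a). indicator ?O x * ennreal (norm x powr (-(real DIM('a) + \<alpha>))) \<partial>lborel)"
    by (rule nn_integral_add) (use mB mO in measurable)
  also have "\<dots> \<le> ennreal (cN DIM('a) p0 * 1 powr (DIM('a) - p0))
      + ennreal (cF DIM('a) (DIM('a) + \<alpha>) * 1 powr (DIM('a) - (DIM('a) + \<alpha>)))"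
    by (intro add_mono near_bound' far_bound') (use p0 a in auto)
  also have "\<dots> = ennreal (cN DIM('a) p0 + cF DIM('a) (DIM('a) + \<alpha>))"
    using cN_nonneg[OF p0(2)] cF_nonneg[of "DIM('a)" "DIM('a) + \<alpha>"] a
    by (simp add: ennreal_plus[symmetric] del: ennreal_plus)
  finally show ?thesis .
qed

lemma pointwise:
  fixes F :: "'a::euclidean_space \<Rightarrow> 'a \<Rightarrow> real" and y z w :: 'a
  assumes a: "0 < \<alpha>" and g: "0 \<le> \<gamma>" and t: "t > 0" and A: "A \<ge> 0" and b: "\<beta> \<ge> \<beta>'"
    and p0: "p0 = real DIM('a) + \<alpha> - \<beta>'"
    and FA: "\<forall>z w. \<bar>F z w\<bar> \<le> A * min (norm (z - w) powr \<beta>) 1"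
  shows "indicator {0<..<t} s * indicator D z * indicator D w *
        ennreal (bdry_factor D \<alpha> \<gamma> s z * qker \<alpha> s y z
          * rpow (1 + (if y = z then 0 else min (norm (z - w)) (t powr (1 / \<alpha>)) / norm (y - z))) \<gamma>
          * (\<bar>F z w\<bar> + \<bar>F w z\<bar>) / norm (z - w) powr (real DIM('a) + \<alpha>))
     \<le> ennreal ((if s \<in> {0<..<t} then 2 powr \<gamma> * Qb \<alpha> \<gamma> (t powr (\<gamma>/\<alpha>)) s (z - y) * (2 * A) else 0)
          * h0 p0 \<alpha> (w - z))"
proof (cases "s \<in> {0<..<t}")
  case False then show ?thesis by simp
next
  case True
  then have s: "s > 0" by simp
  define B where "B = bdry_factor D \<alpha> \<gamma> s z"
  define QR where "QR = qker \<alpha> s y z * rpow (1 + (if y = z then 0 else min (norm (z - w)) (t powr (1 / \<alpha>)) / norm (y - z))) \<gamma>"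
  define G where "G = (\<bar>F z w\<bar> + \<bar>F w z\<bar>) / norm (z - w) powr (real DIM('a) + \<alpha>)"
  have eq: "bdry_factor D \<alpha> \<gamma> s z * qker \<alpha> s y z
          * rpow (1 + (if y = z then 0 else min (norm (z - w)) (t powr (1 / \<alpha>)) / norm (y - z))) \<gamma>
          * (\<bar>F z w\<bar> + \<bar>F w z\<bar>) / norm (z - w) powr (real DIM('a) + \<alpha>) = B * QR * G"
    unfolding B_def QR_def G_def by (simp add: mult.assoc)
  have B: "0 \<le> B" "B \<le> 1" using bdry_le1[OF g s] by (auto simp: B_def)
  have QR: "QR \<le> 2 powr \<gamma> * Qb \<alpha> \<gamma> (t powr (\<gamma>/\<alpha>)) s (z - y)"
    unfolding QR_def by (rule qR_bound[OF a g t s])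
  have QR0: "0 \<le> QR" unfolding QR_def qker_def rpow_def using s by (auto intro!: mult_nonneg_nonneg)
  have G: "G \<le> 2 * A * h0 p0 \<alpha> (w - z)" unfolding G_def by (rule F_bound[OF A b p0 FA])
  have G0: "0 \<le> G" unfolding G_def by simp
  have "B * QR * G \<le> 1 * (2 powr \<gamma> * Qb \<alpha> \<gamma> (t powr (\<gamma>/\<alpha>)) s (z - y)) * (2 * A * h0 p0 \<alpha> (w - z))"
    by (intro mult_mono B QR G G0 QR0 mult_nonneg_nonneg) (use QR0 Qb_nonneg[OF s, of "t powr (\<gamma>/\<alpha>)" \<alpha> \<gamma> "z - y"] in auto)
  then have X: "B * QR * G \<le> (2 powr \<gamma> * Qb \<alpha> \<gamma> (t powr (\<gamma>/\<alpha>)) s (z - y) * (2 * A)) * h0 p0 \<alpha> (w - z)"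
    by (simp add: mult_ac)
  have "indicator {0<..<t} s * indicator D z * indicator D w * ennreal (B * QR * G) \<le> ennreal (B * QR * G)"
    by (auto simp: indicator_def)
  also have "\<dots> \<le> ennreal ((2 powr \<gamma> * Qb \<alpha> \<gamma> (t powr (\<gamma>/\<alpha>)) s (z - y) * (2 * A)) * h0 p0 \<alpha> (w - z))"
    by (rule ennreal_leI[OF X])
  finally show ?thesis unfolding eq using True by simp
qed

lemma time_bound:
  fixes q t K M1 M2 T :: real
  assumes q: "0 \<le> q" "q < 1" and t: "t > 0" and nn: "K \<ge> 0" "M1 \<ge> 0" "M2 \<ge> 0" "T \<ge> 0"
  shows "(\<integral>\<^sup>+s. ennreal (indicator {0..t} s * (K * (M1 + T * M2 * s powr (-q)))) \<partial>lborel)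
     = ennreal (K * (M1 * t + T * M2 * (t powr (1 - q) / (1 - q))))"
proof -
  have mI: "{0..t} \<in> sets (lborel::real measure)" by simp
  have "(\<integral>\<^sup>+s. ennreal (indicator {0..t} s * (K * (M1 + T * M2 * s powr (-q)))) \<partial>lborel)
     = (\<integral>\<^sup>+s. ennreal (K * M1) * indicator {0..t} s + ennreal (K * T * M2) * (indicator {0..t} s * ennreal (s powr (-q))) \<partial>lborel)"
    using nn by (intro nn_integral_cong)
      (auto simp: indicator_def ennreal_plus[symmetric] ennreal_mult[symmetric] algebra_simps simp del: ennreal_plus)
  also have "\<dots> = (\<integral>\<^sup>+s. ennreal (K * M1) * indicator {0..t} s \<partial>lborel)
      + (\<integral>\<^sup>+s. ennreal (K * T * M2) * (indicator {0..t} s * ennreal (s powr (-q))) \<partial>lborel)"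
    by (rule nn_integral_add) (use mI in measurable)
  also have "\<dots> = ennreal (K * M1) * ennreal t
      + ennreal (K * T * M2) * (\<integral>\<^sup>+s. indicator {0..t} s * ennreal (s powr (-q)) \<partial>lborel)"
  proof -
    have "(\<integral>\<^sup>+s. ennreal (K * M1) * indicator {0..t} s \<partial>lborel) = ennreal (K * M1) * ennreal t"
      using t by (simp add: nn_integral_cmult_indicator)
    moreover have "(\<integral>\<^sup>+s. ennreal (K * T * M2) * (indicator {0..t} s * ennreal (s powr (-q))) \<partial>lborel)
      = ennreal (K * T * M2) * (\<integral>\<^sup>+s. indicator {0..t} s * ennreal (s powr (-q)) \<partial>lborel)"
      by (rule nn_integral_cmult) (use mI in measurable)
    ultimately show ?thesis by simp
  qed
  also have "\<dots> = ennreal (K * M1) * ennreal t + ennreal (K * T * M2) * ennreal (t powr (1 - q) / (1 - q))"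
    by (simp add: time_integral[OF q t])
  also have "\<dots> = ennreal (K * (M1 * t + T * M2 * (t powr (1 - q) / (1 - q))))"
    using nn t q by (simp add: ennreal_mult[symmetric] ennreal_plus[symmetric] algebra_simps del: ennreal_plus)
  finally show ?thesis .
qed

lemma NF_bound:
  fixes \<alpha> \<gamma> \<beta> :: real and D :: "'a::euclidean_space set" and F :: "'a \<Rightarrow> 'a \<Rightarrow> real"
  assumes a: "0 < \<alpha>" and g: "0 \<le> \<gamma>" "\<gamma> < min \<alpha> (real DIM('a))" and b: "\<beta> > \<alpha>"
    and A: "A \<ge> 0" and FA: "\<forall>z w. \<bar>F z w\<bar> \<le> A * min (norm (z - w) powr \<beta>) 1" and t: "t > 0"
  defines "p0 \<equiv> real DIM('a) + \<alpha> - min \<beta> (\<alpha> + real DIM('a))"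
  defines "q \<equiv> \<gamma> / \<alpha>"
  defines "Cw \<equiv> cN DIM('a) p0 + cF DIM('a) (DIM('a) + \<alpha>)"
  defines "M1 \<equiv> unit_ball_vol DIM('a) + cF DIM('a) (DIM('a) + \<alpha>)"
  defines "M2 \<equiv> cN DIM('a) \<gamma> + cF DIM('a) (DIM('a) + \<alpha> + \<gamma>)"
  shows "NF \<alpha> \<gamma> D F t \<le> ennreal (2 powr \<gamma> * 2 * Cw * (M1 + M2 / (1 - q)) * A * t)"
proof -
  have p0: "0 \<le> p0" "p0 < real DIM('a)" using b a by (auto simp: p0_def)
  have q: "0 \<le> q" "q < 1" using a g by (auto simp: q_def)
  have Cw: "Cw \<ge> 0" unfolding Cw_def using cN_nonneg[OF p0(2)] cF_nonneg[of "DIM('a)" "DIM('a) + \<alpha>"] a by simp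
  have M1: "M1 \<ge> 0" unfolding M1_def using cF_nonneg[of "DIM('a)" "DIM('a) + \<alpha>"] a by simp
  have M2: "M2 \<ge> 0" unfolding M2_def using cN_nonneg[of \<gamma> "DIM('a)"] cF_nonneg[of "DIM('a)" "DIM('a) + \<alpha> + \<gamma>"] a g by simp
  define T where "T = t powr (\<gamma>/\<alpha>)"
  have T: "T \<ge> 0" by (simp add: T_def)
  define K where "K = 2 powr \<gamma> * (2 * A) * Cw"
  have K: "K \<ge> 0" using A Cw by (simp add: K_def)
  show ?thesis unfolding NF_def
  proof (rule SUP_least)
    fix y assume "y \<in> D"
    define c where "c s z = (if s \<in> {0<..<t} then 2 powr \<gamma> * Qb \<alpha> \<gamma> T s (z - y) * (2 * A) else 0)" for s z
    have c0: "c s z \<ge> 0" for s z unfolding c_def using Qb_nonneg[OF _ T, of s \<alpha> \<gamma> "z - y"] A by auto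
    have step1: "(\<integral>\<^sup>+w. indicator {0<..<t} s * indicator D z * indicator D w *
        ennreal (bdry_factor D \<alpha> \<gamma> s z * qker \<alpha> s y z
          * rpow (1 + (if y = z then 0 else min (norm (z - w)) (t powr (1 / \<alpha>)) / norm (y - z))) \<gamma>
          * (\<bar>F z w\<bar> + \<bar>F w z\<bar>) / norm (z - w) powr (real DIM('a) + \<alpha>)) \<partial>lborel)
       \<le> ennreal (c s z * Cw)" for s z
    proof -
      have "(\<integral>\<^sup>+w. indicator {0<..<t} s * indicator D z * indicator D w *
        ennreal (bdry_factor D \<alpha> \<gamma> s z * qker \<alpha> s y z
          * rpow (1 + (if y = z then 0 else min (norm (z - w)) (t powr (1 / \<alpha>)) / norm (y - z))) \<gamma>
          * (\<bar>F z w\<bar> + \<bar>F w z\<bar>) / norm (z - w) powr (real DIM('a) + \<alpha>)) \<partial>lborel)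
        \<le> (\<integral>\<^sup>+w. ennreal (c s z) * ennreal (h0 p0 \<alpha> (w - z)) \<partial>lborel)"
      proof (rule nn_integral_mono)
        fix w :: 'a
        have "indicator {0<..<t} s * indicator D z * indicator D w *
          ennreal (bdry_factor D \<alpha> \<gamma> s z * qker \<alpha> s y z
          * rpow (1 + (if y = z then 0 else min (norm (z - w)) (t powr (1 / \<alpha>)) / norm (y - z))) \<gamma>
          * (\<bar>F z w\<bar> + \<bar>F w z\<bar>) / norm (z - w) powr (real DIM('a) + \<alpha>))
          \<le> ennreal (c s z * h0 p0 \<alpha> (w - z))"
          unfolding c_def T_def by (rule pointwise[OF a g(1) t A _ _ FA]) (auto simp: p0_def)
        also have "\<dots> = ennreal (c s z) * ennreal (h0 p0 \<alpha> (w - z))"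
          by (rule ennreal_mult[OF c0 h0_nonneg])
        finally show "indicator {0<..<t} s * indicator D z * indicator D w *
          ennreal (bdry_factor D \<alpha> \<gamma> s z * qker \<alpha> s y z
          * rpow (1 + (if y = z then 0 else min (norm (z - w)) (t powr (1 / \<alpha>)) / norm (y - z))) \<gamma>
          * (\<bar>F z w\<bar> + \<bar>F w z\<bar>) / norm (z - w) powr (real DIM('a) + \<alpha>))
          \<le> ennreal (c s z) * ennreal (h0 p0 \<alpha> (w - z))" .
      qed
      also have "\<dots> = ennreal (c s z) * (\<integral>\<^sup>+w. ennreal (h0 p0 \<alpha> (w - z)) \<partial>lborel)"
        by (rule nn_integral_cmult) measurable
      also have "\<dots> \<le> ennreal (c s z) * ennreal Cw"
        unfolding Cw_def by (intro mult_left_mono W_int p0 a) simp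
      also have "\<dots> = ennreal (c s z * Cw)" by (rule ennreal_mult[OF c0 Cw, symmetric])
      finally show ?thesis .
    qed
    have step2: "(\<integral>\<^sup>+(z::'a). ennreal (c s z * Cw) \<partial>lborel)
       \<le> ennreal (indicator {0..t} s * (K * (M1 + T * M2 * s powr (-q))))" for s
    proof (cases "s \<in> {0<..<t}")
      case False
      then have "c s z = 0" for z unfolding c_def by auto
      then show ?thesis by simp
    next
      case True
      then have s: "s > 0" by simp
      have mQ: "(\<lambda>x::'a. ennreal (Qb \<alpha> \<gamma> T s x)) \<in> borel_measurable borel"
        by measurable
      have gd: "\<gamma> < real DIM('a)" using g by simp
      have QI: "(\<integral>\<^sup>+(x::'a). ennreal (Qb \<alpha> \<gamma> T s x) \<partial>lborel) \<le> ennreal (M1 + T * M2 * s powr (-q))"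
        using Qb_int[OF a g(1) gd T s] by (simp add: M1_def M2_def q_def mult.assoc)
      have e1: "ennreal (c s z * Cw) = ennreal K * ennreal (Qb \<alpha> \<gamma> T s (z - y))" for z :: 'a
      proof -
        have "c s z * Cw = K * Qb \<alpha> \<gamma> T s (z - y)" using True by (simp add: c_def K_def mult_ac)
        then show ?thesis using ennreal_mult[OF K Qb_nonneg[OF s T]] by simp
      qed
      have I: "(\<integral>\<^sup>+(z::'a). ennreal (Qb \<alpha> \<gamma> T s (z - y)) \<partial>lborel) = (\<integral>\<^sup>+(x::'a). ennreal (Qb \<alpha> \<gamma> T s x) \<partial>lborel)"
        by (rule nn_integral_translate[OF mQ])
      have "(\<integral>\<^sup>+(z::'a). ennreal (c s z * Cw) \<partial>lborel) = (\<integral>\<^sup>+(z::'a). ennreal K * ennreal (Qb \<alpha> \<gamma> T s (z - y)) \<partial>lborel)"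
        by (simp only: e1)
      also have "\<dots> = ennreal K * (\<integral>\<^sup>+(z::'a). ennreal (Qb \<alpha> \<gamma> T s (z - y)) \<partial>lborel)"
        by (rule nn_integral_cmult) (use mQ in measurable)
      also have "\<dots> = ennreal K * (\<integral>\<^sup>+(x::'a). ennreal (Qb \<alpha> \<gamma> T s x) \<partial>lborel)"
        by (simp only: I)
      also have "\<dots> \<le> ennreal K * ennreal (M1 + T * M2 * s powr (-q))"
        using mult_left_mono[OF QI, of "ennreal K"] by simp
      also have "\<dots> = ennreal (indicator {0..t} s * (K * (M1 + T * M2 * s powr (-q))))"
      proof -
        have nn: "0 \<le> M1 + T * M2 * s powr (-q)" using M1 M2 T by simp
        show ?thesis using True by (subst ennreal_mult[OF K nn, symmetric]) (simp add: indicator_def)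
      qed
      finally show ?thesis .
    qed
    have "(\<integral>\<^sup>+ s. \<integral>\<^sup>+ z. \<integral>\<^sup>+ w.
        indicator {0<..<t} s * indicator D z * indicator D w *
        ennreal (bdry_factor D \<alpha> \<gamma> s z * qker \<alpha> s y z
          * rpow (1 + (if y = z then 0 else min (norm (z - w)) (t powr (1 / \<alpha>)) / norm (y - z))) \<gamma>
          * (\<bar>F z w\<bar> + \<bar>F w z\<bar>) / norm (z - w) powr (real DIM('a) + \<alpha>))
        \<partial>lborel \<partial>lborel \<partial>lborel)
      \<le> (\<integral>\<^sup>+ s. \<integral>\<^sup>+ (z::'a). ennreal (c s z * Cw) \<partial>lborel \<partial>lborel)"
      by (rule nn_integral_mono, rule nn_integral_mono, rule step1)
    also have "\<dots> \<le> (\<integral>\<^sup>+ s. ennreal (indicator {0..t} s * (K * (M1 + T * M2 * s powr (-q)))) \<partial>lborel)"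
      by (rule nn_integral_mono, rule step2)
    also have "\<dots> = ennreal (K * (M1 * t + T * M2 * (t powr (1 - q) / (1 - q))))"
      by (rule time_bound[OF q t K M1 M2 T])
    also have "ennreal (K * (M1 * t + T * M2 * (t powr (1 - q) / (1 - q)))) = ennreal (2 powr \<gamma> * 2 * Cw * (M1 + M2 / (1 - q)) * A * t)"
    proof -
      have e: "T * t powr (1 - q) = t" using t by (simp add: T_def q_def powr_add[symmetric])
      have "T * M2 * (t powr (1 - q) / (1 - q)) = M2 * (T * t powr (1 - q)) / (1 - q)" by simp
      also have "\<dots> = M2 * t / (1 - q)" by (simp only: e)
      finally have e2: "T * M2 * (t powr (1 - q) / (1 - q)) = M2 * t / (1 - q)" .
      have "K * (M1 * t + T * M2 * (t powr (1 - q) / (1 - q))) = K * (M1 * t + M2 * t / (1 - q))" by (simp only: e2)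
      also have "\<dots> = 2 powr \<gamma> * 2 * Cw * (M1 + M2 / (1 - q)) * A * t" by (simp add: K_def algebra_simps)
      finally show ?thesis by simp
    qed
    finally show "(\<integral>\<^sup>+ s. \<integral>\<^sup>+ z. \<integral>\<^sup>+ w.
        indicator {0<..<t} s * indicator D z * indicator D w *
        ennreal (bdry_factor D \<alpha> \<gamma> s z * qker \<alpha> s y z
          * rpow (1 + (if y = z then 0 else min (norm (z - w)) (t powr (1 / \<alpha>)) / norm (y - z))) \<gamma>
          * (\<bar>F z w\<bar> + \<bar>F w z\<bar>) / norm (z - w) powr (real DIM('a) + \<alpha>))
        \<partial>lborel \<partial>lborel \<partial>lborel) \<le> ennreal (2 powr \<gamma> * 2 * Cw * (M1 + M2 / (1 - q)) * A * t)" .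
  qed
qed

theorem proposition4p2:
  fixes \<alpha> \<gamma> \<beta> :: real
  assumes "0 < \<alpha>" "\<alpha> < 2" "0 \<le> \<gamma>" "\<gamma> < min \<alpha> (real DIM('a::euclidean_space))"
    and "\<beta> > \<alpha>"
  shows "\<exists>C>0. \<forall>(D::'a set) (F::'a \<Rightarrow> 'a \<Rightarrow> real) A.
           D \<in> sets borel \<longrightarrow> A > 0 \<longrightarrow> (\<lambda>(z, w). F z w) \<in> borel_measurable borel \<longrightarrow>
           (\<forall>z w. \<bar>F z w\<bar> \<le> A * min (norm (z - w) powr \<beta>) 1) \<longrightarrow>
           (\<forall>t>0. NF \<alpha> \<gamma> D F t \<le> ennreal (C * A * t)) \<and> J_class \<alpha> \<gamma> D F"
proof -
  note a = assms(1) and g = assms(3,4) and b = assms(5)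
  define p0 where "p0 = real DIM('a) + \<alpha> - min \<beta> (\<alpha> + real DIM('a))"
  define q where "q = \<gamma> / \<alpha>"
  define Cw where "Cw = cN DIM('a) p0 + cF DIM('a) (DIM('a) + \<alpha>)"
  define M1 where "M1 = unit_ball_vol DIM('a) + cF DIM('a) (DIM('a) + \<alpha>)"
  define M2 where "M2 = cN DIM('a) \<gamma> + cF DIM('a) (DIM('a) + \<alpha> + \<gamma>)"
  define C0 where "C0 = 2 powr \<gamma> * 2 * Cw * (M1 + M2 / (1 - q))"
  have p0: "0 \<le> p0" "p0 < real DIM('a)" using b a by (auto simp: p0_def)
  have q: "0 \<le> q" "q < 1" using a g by (auto simp: q_def)
  have Cw: "Cw \<ge> 0" unfolding Cw_def using cN_nonneg[OF p0(2)] cF_nonneg[of "DIM('a)" "DIM('a) + \<alpha>"] a by simp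
  have M1: "M1 \<ge> 0" unfolding M1_def using cF_nonneg[of "DIM('a)" "DIM('a) + \<alpha>"] a by simp
  have M2: "M2 \<ge> 0" unfolding M2_def using cN_nonneg[of \<gamma> "DIM('a)"] cF_nonneg[of "DIM('a)" "DIM('a) + \<alpha> + \<gamma>"] a g by simp
  have C0: "C0 \<ge> 0" unfolding C0_def using Cw M1 M2 q by simp
  show ?thesis
  proof (rule exI[of _ "C0 + 1"], rule conjI)
    show "C0 + 1 > 0" using C0 by simp
    show "\<forall>(D::'a set) (F::'a \<Rightarrow> 'a \<Rightarrow> real) A.
           D \<in> sets borel \<longrightarrow> A > 0 \<longrightarrow> (\<lambda>(z, w). F z w) \<in> borel_measurable borel \<longrightarrow>
           (\<forall>z w. \<bar>F z w\<bar> \<le> A * min (norm (z - w) powr \<beta>) 1) \<longrightarrow>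
           (\<forall>t>0. NF \<alpha> \<gamma> D F t \<le> ennreal ((C0 + 1) * A * t)) \<and> J_class \<alpha> \<gamma> D F"
    proof (intro allI impI)
      fix D :: "'a set" and F :: "'a \<Rightarrow> 'a \<Rightarrow> real" and A :: real
      assume A: "A > 0" and FA: "\<forall>z w. \<bar>F z w\<bar> \<le> A * min (norm (z - w) powr \<beta>) 1"
      have NFb: "NF \<alpha> \<gamma> D F t \<le> ennreal (C0 * A * t)" if t: "t > 0" for t
        using NF_bound[OF a g b less_imp_le[OF A] FA t] unfolding C0_def Cw_def M1_def M2_def p0_def q_def .
      have NFb': "NF \<alpha> \<gamma> D F t \<le> ennreal ((C0 + 1) * A * t)" if t: "t > 0" for t
      proof -
        have "C0 * A * t \<le> (C0 + 1) * A * t" using A t by (intro mult_right_mono) auto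
        then show ?thesis using NFb[OF t] by (meson ennreal_leI order_trans)
      qed
      have J: "J_class \<alpha> \<gamma> D F"
        unfolding J_class_def
      proof (rule conjI)
        show "\<exists>M. \<forall>z\<in>D. \<forall>w\<in>D. \<bar>F z w\<bar> \<le> M"
        proof (intro exI ballI)
          fix z w :: 'a
          have "A * min (norm (z - w) powr \<beta>) 1 \<le> A * 1" using A by (intro mult_left_mono) auto
          then show "\<bar>F z w\<bar> \<le> A" using FA by (metis mult.right_neutral order_trans)
        qed
        have lim: "((\<lambda>t. ennreal (C0 * A * t)) \<longlongrightarrow> 0) (at_right 0)"
        proof -
          have "((\<lambda>t. C0 * A * t) \<longlongrightarrow> C0 * A * 0) (at_right 0)"
            by (intro tendsto_intros)
          then have "((\<lambda>t. ennreal (C0 * A * t)) \<longlongrightarrow> ennreal (C0 * A * 0)) (at_right 0)"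
            by (rule tendsto_ennrealI)
          then show ?thesis by simp
        qed
        show "(NF \<alpha> \<gamma> D F \<longlongrightarrow> 0) (at_right 0)"
        proof (rule tendsto_sandwich[OF _ _ tendsto_const lim])
          show "\<forall>\<^sub>F t in at_right 0. 0 \<le> NF \<alpha> \<gamma> D F t" by simp
          show "\<forall>\<^sub>F t in at_right 0. NF \<alpha> \<gamma> D F t \<le> ennreal (C0 * A * t)"
            using eventually_at_right_less[of "0::real"] by eventually_elim (rule NFb)
        qed
      qed
      show "(\<forall>t>0. NF \<alpha> \<gamma> D F t \<le> ennreal ((C0 + 1) * A * t)) \<and> J_class \<alpha> \<gamma> D F"
        using NFb' J by blast
    qed
  qed
qed

end
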